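(* Let $L=\prod_i L_i$ be a product of fields with an action of a group $G$ by ring automorphisms, such that $G$ acts transitively on the set $\{e_i\}_i$ of principal idempotents of $L$. Let $M$ be a module over the skew group ring $L\rtimes G$ such that the natural map $M\to\prod_i e_i\cdot M$, $m\mapsto(e_i\cdot m)_i$, is an isomorphism and $\dim_{L_i}e_i\cdot M<\infty$ for some $i$. Then $M$ is free of finite rank over $L$.
   Context: The principal idempotents of $L=\prod_iL_i$ are the elements $e_i$ with $1$ in the $i$-th coordinate and $0$ elsewhere; any ring automorphism of $L$ permutes them. *)

theory Defs
  imports "HOL-Algebra.Algebra"
begin

definition prod_ring :: "'i set \<Rightarrow> ('i \<Rightarrow> 'a ring) \<Rightarrow> ('i \<Rightarrow> 'a) ring" where
  "prod_ring I R =
    \<lparr> carrier = (\<Pi>\<^sub>E i\<in>I. carrier (R i)),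
      monoid.mult = (\<lambda>x y. \<lambda>i\<in>I. x i \<otimes>\<^bsub>R i\<^esub> y i),
      monoid.one = (\<lambda>i\<in>I. \<one>\<^bsub>R i\<^esub>),
      ring.zero = (\<lambda>i\<in>I. \<zero>\<^bsub>R i\<^esub>),
      ring.add = (\<lambda>x y. \<lambda>i\<in>I. x i \<oplus>\<^bsub>R i\<^esub> y i) \<rparr>"

definition prin_idem :: "'i set \<Rightarrow> ('i \<Rightarrow> 'a ring) \<Rightarrow> 'i \<Rightarrow> ('i \<Rightarrow> 'a)" where
  "prin_idem I R i = (\<lambda>j\<in>I. if j = i then \<one>\<^bsub>R j\<^esub> else \<zero>\<^bsub>R j\<^esub>)"

text \<open>Embedding of the factor R i into L (coordinate i, zero elsewhere);
  through it e_i M becomes an R i - vector space.\<close>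
definition coord_incl :: "'i set \<Rightarrow> ('i \<Rightarrow> 'a ring) \<Rightarrow> 'i \<Rightarrow> 'a \<Rightarrow> ('i \<Rightarrow> 'a)" where
  "coord_incl I R i a = (\<lambda>j\<in>I. if j = i then a else \<zero>\<^bsub>R j\<^esub>)"

definition finite_basis ::
    "('k, 'c) ring_scheme \<Rightarrow> ('k \<Rightarrow> 'm \<Rightarrow> 'm) \<Rightarrow> ('m, 'd) ring_scheme \<Rightarrow> 'm set \<Rightarrow> 'm set \<Rightarrow> bool" where
  "finite_basis K s M V B \<longleftrightarrow> finite B \<and> B \<subseteq> V \<and>
     (\<forall>v\<in>V. \<exists>!c. c \<in> (B \<rightarrow>\<^sub>E carrier K) \<and> v = (\<Oplus>\<^bsub>M\<^esub>b\<in>B. s (c b) b))"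

definition free_finite_rank :: "('k, 'c) ring_scheme \<Rightarrow> ('k, 'm, 'd) module_scheme \<Rightarrow> bool" where
  "free_finite_rank L M \<longleftrightarrow> (\<exists>B. finite_basis L (smult M) M (carrier M) B)"

end

theory Submission
  imports Defs
begin


lemma pr_carrier: "carrier (prod_ring I R) = (\<Pi>\<^sub>E i\<in>I. carrier (R i))"
  by (simp add: prod_ring_def)

lemma pr_mult: "x \<otimes>\<^bsub>prod_ring I R\<^esub> y = (\<lambda>i\<in>I. x i \<otimes>\<^bsub>R i\<^esub> y i)"
  by (simp add: prod_ring_def)

lemma ci_carrier:
  assumes "\<And>k. k \<in> I \<Longrightarrow> ring (R k)" "j \<in> I" "x \<in> carrier (R j)"
  shows "coord_incl I R j x \<in> carrier (prod_ring I R)"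
  using assms by (auto simp: pr_carrier coord_incl_def ring.ring_simprules(2))

lemma pi_is_ci: "prin_idem I R j = coord_incl I R j \<one>\<^bsub>R j\<^esub>"
  by (auto simp: prin_idem_def coord_incl_def)

lemma pi_carrier:
  assumes "\<And>k. k \<in> I \<Longrightarrow> ring (R k)" "j \<in> I"
  shows "prin_idem I R j \<in> carrier (prod_ring I R)"
  using assms by (simp add: pi_is_ci ci_carrier ring.ring_simprules(6))

lemma ci_at: "j \<in> I \<Longrightarrow> coord_incl I R j x j = x"
  by (simp add: coord_incl_def)

lemma ci_inj: "j \<in> I \<Longrightarrow> coord_incl I R j x = coord_incl I R j y \<Longrightarrow> x = y"
  by (metis ci_at)

lemma pi_mult_left:
  assumes "\<And>k. k \<in> I \<Longrightarrow> ring (R k)" "j \<in> I" "v \<in> carrier (prod_ring I R)"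
  shows "prin_idem I R j \<otimes>\<^bsub>prod_ring I R\<^esub> v = coord_incl I R j (v j)"
proof (rule ext)
  fix k show "(prin_idem I R j \<otimes>\<^bsub>prod_ring I R\<^esub> v) k = coord_incl I R j (v j) k"
  proof (cases "k \<in> I")
    case True
    then have "v k \<in> carrier (R k)" using assms(3) by (auto simp: pr_carrier)
    interpret Rk: ring "R k" by (rule assms(1)[OF True])
    interpret Rj: ring "R j" by (rule assms(1)[OF assms(2)])
    show ?thesis using True \<open>v k \<in> carrier (R k)\<close>
      by (auto simp add: pr_mult prin_idem_def coord_incl_def)
  qed (simp add: pr_mult coord_incl_def)
qed

lemma pi_mult_right:
  assumes "\<And>k. k \<in> I \<Longrightarrow> ring (R k)" "j \<in> I" "v \<in> carrier (prod_ring I R)"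
  shows "v \<otimes>\<^bsub>prod_ring I R\<^esub> prin_idem I R j = coord_incl I R j (v j)"
proof (rule ext)
  fix k show "(v \<otimes>\<^bsub>prod_ring I R\<^esub> prin_idem I R j) k = coord_incl I R j (v j) k"
  proof (cases "k \<in> I")
    case True
    then have "v k \<in> carrier (R k)" using assms(3) by (auto simp: pr_carrier)
    interpret Rk: ring "R k" by (rule assms(1)[OF True])
    interpret Rj: ring "R j" by (rule assms(1)[OF assms(2)])
    show ?thesis using True \<open>v k \<in> carrier (R k)\<close>
      by (auto simp add: pr_mult prin_idem_def coord_incl_def)
  qed (simp add: pr_mult coord_incl_def)
qed

lemma phi_ci:
  assumes rings: "\<And>k. k \<in> I \<Longrightarrow> ring (R k)" and ij: "i \<in> I" "j \<in> I"
    and h: "f \<in> ring_hom (prod_ring I R) (prod_ring I R)"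
    and fe: "f (prin_idem I R i) = prin_idem I R j"
    and x: "x \<in> carrier (R i)"
  shows "f (coord_incl I R i x) = coord_incl I R j (f (coord_incl I R i x) j)
     \<and> f (coord_incl I R i x) j \<in> carrier (R j)"
proof -
  have c: "coord_incl I R i x \<in> carrier (prod_ring I R)" by (rule ci_carrier[of I R, OF rings ij(1) x])
  have v: "f (coord_incl I R i x) \<in> carrier (prod_ring I R)" using ring_hom_closed[OF h c] .
  have "coord_incl I R i x = coord_incl I R i x \<otimes>\<^bsub>prod_ring I R\<^esub> prin_idem I R i"
    using pi_mult_right[OF rings ij(1) c] ci_at[OF ij(1), of R x] by simp
  then have "f (coord_incl I R i x) = f (coord_incl I R i x) \<otimes>\<^bsub>prod_ring I R\<^esub> prin_idem I R j"
    using ring_hom_mult[OF h c pi_carrier[of I R, OF rings ij(1)]] fe by simp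
  also have "\<dots> = coord_incl I R j (f (coord_incl I R i x) j)"
    using pi_mult_right[OF rings ij(2) v] .
  finally show ?thesis using v ij by (auto simp: pr_carrier PiE_iff)
qed



theorem lemma2p4:
  fixes I :: "'i set" and R :: "'i \<Rightarrow> 'a ring"
    and G :: "'g monoid" and \<phi> :: "'g \<Rightarrow> ('i \<Rightarrow> 'a) \<Rightarrow> ('i \<Rightarrow> 'a)"
    and M :: "('i \<Rightarrow> 'a, 'm) module" and \<psi> :: "'g \<Rightarrow> 'm \<Rightarrow> 'm"
  assumes fields: "\<And>i. i \<in> I \<Longrightarrow> field (R i)"
    and grp: "group G"
    and act_L: "group_action G (carrier (prod_ring I R)) \<phi>"
    and ring_aut: "\<And>g. g \<in> carrier G \<Longrightarrow> \<phi> g \<in> ring_hom (prod_ring I R) (prod_ring I R)"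
    and transitive: "\<And>i j. \<lbrakk>i \<in> I; j \<in> I\<rbrakk> \<Longrightarrow>
           \<exists>g\<in>carrier G. \<phi> g (prin_idem I R i) = prin_idem I R j"
    and M_mod: "module (prod_ring I R) M"
    and act_M: "group_action G (carrier M) \<psi>"
    and act_M_add: "\<And>g x y. \<lbrakk>g \<in> carrier G; x \<in> carrier M; y \<in> carrier M\<rbrakk> \<Longrightarrow>
           \<psi> g (x \<oplus>\<^bsub>M\<^esub> y) = \<psi> g x \<oplus>\<^bsub>M\<^esub> \<psi> g y"
    and act_M_semilin: "\<And>g a x. \<lbrakk>g \<in> carrier G; a \<in> carrier (prod_ring I R); x \<in> carrier M\<rbrakk> \<Longrightarrow>
           \<psi> g (a \<odot>\<^bsub>M\<^esub> x) = \<phi> g a \<odot>\<^bsub>M\<^esub> \<psi> g x"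
    and nat_iso: "bij_betw (\<lambda>m. \<lambda>i\<in>I. prin_idem I R i \<odot>\<^bsub>M\<^esub> m) (carrier M)
           (\<Pi>\<^sub>E i\<in>I. (\<lambda>m. prin_idem I R i \<odot>\<^bsub>M\<^esub> m) ` carrier M)"
    and fin_dim: "\<exists>i\<in>I. \<exists>B. finite_basis (R i) (\<lambda>a x. coord_incl I R i a \<odot>\<^bsub>M\<^esub> x) M
           ((\<lambda>m. prin_idem I R i \<odot>\<^bsub>M\<^esub> m) ` carrier M) B"
  shows "free_finite_rank (prod_ring I R) M"
proof -
  let ?L = "prod_ring I R"
  let ?e = "prin_idem I R"
  let ?ci = "coord_incl I R"
  let ?E = "\<lambda>j. (\<lambda>m. ?e j \<odot>\<^bsub>M\<^esub> m) ` carrier M"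
  have rings: "\<And>k. k \<in> I \<Longrightarrow> ring (R k)" using fields field.is_ring by blast
  interpret M: module ?L M by (rule M_mod)
  interpret G: group G by (rule grp)
  interpret AL: group_action G "carrier ?L" \<phi> by (rule act_L)
  interpret AM: group_action G "carrier M" \<psi> by (rule act_M)
  have eC: "?e j \<in> carrier ?L" if "j \<in> I" for j
    by (rule pi_carrier[of I R, OF rings that])
  have ciC: "?ci j x \<in> carrier ?L" if "j \<in> I" "x \<in> carrier (R j)" for j x
    by (rule ci_carrier[of I R, OF rings that])
  have psiC: "\<psi> g x \<in> carrier M" if "g \<in> carrier G" "x \<in> carrier M" for g x
    using AM.element_image that by blast
  have psi_inv: "\<psi> (inv\<^bsub>G\<^esub> g) (\<psi> g x) = x" if "g \<in> carrier G" "x \<in> carrier M" for g x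
    using AM.orbit_sym_aux that by blast
  have psi_inv2: "\<psi> g (\<psi> (inv\<^bsub>G\<^esub> g) x) = x" if "g \<in> carrier G" "x \<in> carrier M" for g x
    by (metis G.inv_closed G.inv_inv psi_inv that)
  have psi0: "\<psi> g \<zero>\<^bsub>M\<^esub> = \<zero>\<^bsub>M\<^esub>" if g: "g \<in> carrier G" for g
  proof -
    have z: "\<psi> g \<zero>\<^bsub>M\<^esub> \<in> carrier M" using psiC g M.zero_closed by blast
    have "\<psi> g \<zero>\<^bsub>M\<^esub> = \<psi> g \<zero>\<^bsub>M\<^esub> \<oplus>\<^bsub>M\<^esub> \<psi> g \<zero>\<^bsub>M\<^esub>"
      using act_M_add[OF g M.zero_closed M.zero_closed] by simp
    then have "\<zero>\<^bsub>M\<^esub> = (\<psi> g \<zero>\<^bsub>M\<^esub> \<oplus>\<^bsub>M\<^esub> \<psi> g \<zero>\<^bsub>M\<^esub>) \<oplus>\<^bsub>M\<^esub> (\<ominus>\<^bsub>M\<^esub> \<psi> g \<zero>\<^bsub>M\<^esub>)"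
      using M.r_neg[OF z] by simp
    also have "\<dots> = \<psi> g \<zero>\<^bsub>M\<^esub> \<oplus>\<^bsub>M\<^esub> (\<psi> g \<zero>\<^bsub>M\<^esub> \<oplus>\<^bsub>M\<^esub> (\<ominus>\<^bsub>M\<^esub> \<psi> g \<zero>\<^bsub>M\<^esub>))"
      using M.a_assoc[OF z z M.a_inv_closed[OF z]] .
    also have "\<dots> = \<psi> g \<zero>\<^bsub>M\<^esub>" using M.r_neg[OF z] M.r_zero[OF z] by simp
    finally show ?thesis by simp
  qed
  have psi_sum: "\<psi> g (\<Oplus>\<^bsub>M\<^esub>a\<in>A. f a) = (\<Oplus>\<^bsub>M\<^esub>a\<in>A. \<psi> g (f a))"
    if g: "g \<in> carrier G" and fin: "finite A" and f: "f \<in> A \<rightarrow> carrier M" for g A f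
    using fin f
  proof (induct A rule: finite_induct)
    case empty then show ?case using psi0 g by simp
  next
    case (insert a A)
    then have fa: "f a \<in> carrier M" and fA: "f \<in> A \<rightarrow> carrier M" by auto
    have pA: "(\<lambda>x. \<psi> g (f x)) \<in> A \<rightarrow> carrier M" using fA psiC g by blast
    have "(\<Oplus>\<^bsub>M\<^esub>x\<in>insert a A. f x) = f a \<oplus>\<^bsub>M\<^esub> (\<Oplus>\<^bsub>M\<^esub>x\<in>A. f x)"
      by (rule M.finsum_insert[OF insert(1,2) fA fa])
    then have "\<psi> g (\<Oplus>\<^bsub>M\<^esub>x\<in>insert a A. f x) = \<psi> g (f a) \<oplus>\<^bsub>M\<^esub> (\<Oplus>\<^bsub>M\<^esub>x\<in>A. \<psi> g (f x))"
      using act_M_add[OF g fa M.finsum_closed[OF fA]] insert fA by simp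
    also have "\<dots> = (\<Oplus>\<^bsub>M\<^esub>x\<in>insert a A. \<psi> g (f x))"
      using M.finsum_insert[OF insert(1,2) pA] psiC[OF g fa] by simp
    finally show ?case .
  qed
  have eci: "?e j \<otimes>\<^bsub>?L\<^esub> ?ci j x = ?ci j x" if "j \<in> I" "x \<in> carrier (R j)" for j x
    using pi_mult_left[of I R, OF rings that(1) ciC[OF that]] ci_at[OF that(1), of R x] by simp
  have comp: "?e j \<odot>\<^bsub>M\<^esub> (c \<odot>\<^bsub>M\<^esub> x) = ?ci j (c j) \<odot>\<^bsub>M\<^esub> (?e j \<odot>\<^bsub>M\<^esub> x)"
    if j: "j \<in> I" and c: "c \<in> carrier ?L" and x: "x \<in> carrier M" for j c x
  proof -
    have cj: "c j \<in> carrier (R j)" using c j by (auto simp: pr_carrier)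
    have "?e j \<odot>\<^bsub>M\<^esub> (c \<odot>\<^bsub>M\<^esub> x) = (?e j \<otimes>\<^bsub>?L\<^esub> c) \<odot>\<^bsub>M\<^esub> x"
      using M.smult_assoc1 eC[OF j] c x by simp
    also have "?e j \<otimes>\<^bsub>?L\<^esub> c = ?ci j (c j) \<otimes>\<^bsub>?L\<^esub> ?e j"
      using pi_mult_left[of I R, OF rings j c] pi_mult_right[of I R, OF rings j ciC[OF j cj]]
        ci_at[OF j, of R "c j"] by simp
    also have "(?ci j (c j) \<otimes>\<^bsub>?L\<^esub> ?e j) \<odot>\<^bsub>M\<^esub> x = ?ci j (c j) \<odot>\<^bsub>M\<^esub> (?e j \<odot>\<^bsub>M\<^esub> x)"
      using M.smult_assoc1 ciC[OF j cj] eC[OF j] x by simp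
    finally show ?thesis .
  qed
  have EsubM: "?E j \<subseteq> carrier M" if "j \<in> I" for j
    using eC[OF that] by auto
  have sum_fix: "?e j \<odot>\<^bsub>M\<^esub> (\<Oplus>\<^bsub>M\<^esub>a\<in>A. ?ci j (f a) \<odot>\<^bsub>M\<^esub> h a) = (\<Oplus>\<^bsub>M\<^esub>a\<in>A. ?ci j (f a) \<odot>\<^bsub>M\<^esub> h a)"
    if j: "j \<in> I" and fin: "finite A" and f: "f \<in> A \<rightarrow> carrier (R j)" and h: "h \<in> A \<rightarrow> carrier M" for j A f h
  proof -
    have cl: "(\<lambda>a. ?ci j (f a) \<odot>\<^bsub>M\<^esub> h a) \<in> A \<rightarrow> carrier M" using f h ciC[OF j] by auto
    have "?e j \<odot>\<^bsub>M\<^esub> (\<Oplus>\<^bsub>M\<^esub>a\<in>A. ?ci j (f a) \<odot>\<^bsub>M\<^esub> h a) = (\<Oplus>\<^bsub>M\<^esub>a\<in>A. ?e j \<odot>\<^bsub>M\<^esub> (?ci j (f a) \<odot>\<^bsub>M\<^esub> h a))"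
      using M.finsum_smult_ldistr[OF fin eC[OF j] cl] .
    also have "\<dots> = (\<Oplus>\<^bsub>M\<^esub>a\<in>A. ?ci j (f a) \<odot>\<^bsub>M\<^esub> h a)"
    proof (rule M.finsum_cong'[OF refl cl])
      fix a assume a: "a \<in> A"
      then have fa: "f a \<in> carrier (R j)" and ha: "h a \<in> carrier M" using f h by auto
      show "?e j \<odot>\<^bsub>M\<^esub> (?ci j (f a) \<odot>\<^bsub>M\<^esub> h a) = ?ci j (f a) \<odot>\<^bsub>M\<^esub> h a"
        using M.smult_assoc1[OF eC[OF j] ciC[OF j fa] ha] eci[OF j fa] by simp
    qed
    finally show ?thesis .
  qed
  have psi_semi: "\<psi> g (?e i' \<odot>\<^bsub>M\<^esub> m) = ?e j' \<odot>\<^bsub>M\<^esub> \<psi> g m"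
    if "g \<in> carrier G" "i' \<in> I" "\<phi> g (?e i') = ?e j'" "m \<in> carrier M" for g i' j' m
    using act_M_semilin[OF that(1) eC[OF that(2)] that(4)] that(3) by simp
  have phi_ij: "\<phi> g (?ci i' x) = ?ci j' (\<phi> g (?ci i' x) j') \<and> \<phi> g (?ci i' x) j' \<in> carrier (R j')"
    if "g \<in> carrier G" "i' \<in> I" "j' \<in> I" "\<phi> g (?e i') = ?e j'" "x \<in> carrier (R i')" for g i' j' x
    using phi_ci[of I R i' j' "\<phi> g" x, OF rings that(2,3) ring_aut[OF that(1)] that(4,5)] .
  have phi_eq: "\<phi> g (?ci i' x) = ?ci j' (\<phi> g (?ci i' x) j')"
    if "g \<in> carrier G" "i' \<in> I" "j' \<in> I" "\<phi> g (?e i') = ?e j'" "x \<in> carrier (R i')" for g i' j' x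
    using phi_ij[OF that] by (rule conjunct1)
  have phi_car: "\<phi> g (?ci i' x) j' \<in> carrier (R j')"
    if "g \<in> carrier G" "i' \<in> I" "j' \<in> I" "\<phi> g (?e i') = ?e j'" "x \<in> carrier (R i')" for g i' j' x
    using phi_ij[OF that] by (rule conjunct2)
  have psi_lin_sum: "\<psi> g (\<Oplus>\<^bsub>M\<^esub>x\<in>A. a x \<odot>\<^bsub>M\<^esub> h x) = (\<Oplus>\<^bsub>M\<^esub>x\<in>A. \<phi> g (a x) \<odot>\<^bsub>M\<^esub> \<psi> g (h x))"
    if g: "g \<in> carrier G" and fin: "finite A" and a: "a \<in> A \<rightarrow> carrier ?L" and h: "h \<in> A \<rightarrow> carrier M"
    for g A a h
  proof -
    have cl: "(\<lambda>x. a x \<odot>\<^bsub>M\<^esub> h x) \<in> A \<rightarrow> carrier M" using a h by auto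
    have cl2: "(\<lambda>x. \<phi> g (a x) \<odot>\<^bsub>M\<^esub> \<psi> g (h x)) \<in> A \<rightarrow> carrier M"
      using a h ring_hom_closed[OF ring_aut[OF g]] psiC[OF g] by (auto intro!: M.smult_closed)
    have "\<psi> g (\<Oplus>\<^bsub>M\<^esub>x\<in>A. a x \<odot>\<^bsub>M\<^esub> h x) = (\<Oplus>\<^bsub>M\<^esub>x\<in>A. \<psi> g (a x \<odot>\<^bsub>M\<^esub> h x))"
      using psi_sum[OF g fin cl] .
    also have "\<dots> = (\<Oplus>\<^bsub>M\<^esub>x\<in>A. \<phi> g (a x) \<odot>\<^bsub>M\<^esub> \<psi> g (h x))"
      by (rule M.finsum_cong'[OF refl cl2]) (use a h act_M_semilin[OF g] in auto)
    finally show ?thesis .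
  qed
  obtain i B where iI: "i \<in> I" and bas0: "finite_basis (R i) (\<lambda>a x. ?ci i a \<odot>\<^bsub>M\<^esub> x) M (?E i) B"
    using fin_dim by blast
  have finB: "finite B" and BE: "B \<subseteq> ?E i"
    and basU: "\<And>v. v \<in> ?E i \<Longrightarrow> \<exists>!c. c \<in> B \<rightarrow>\<^sub>E carrier (R i) \<and> v = (\<Oplus>\<^bsub>M\<^esub>b\<in>B. ?ci i (c b) \<odot>\<^bsub>M\<^esub> b)"
  proof -
    have bas1: "finite B \<and> B \<subseteq> ?E i \<and> (\<forall>v\<in>?E i. \<exists>!c. c \<in> B \<rightarrow>\<^sub>E carrier (R i) \<and> v = (\<Oplus>\<^bsub>M\<^esub>b\<in>B. ?ci i (c b) \<odot>\<^bsub>M\<^esub> b))"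
      using bas0 unfolding finite_basis_def .
    show "finite B" "B \<subseteq> ?E i" using bas1 by blast+
    show "\<And>v. v \<in> ?E i \<Longrightarrow> \<exists>!c. c \<in> B \<rightarrow>\<^sub>E carrier (R i) \<and> v = (\<Oplus>\<^bsub>M\<^esub>b\<in>B. ?ci i (c b) \<odot>\<^bsub>M\<^esub> b)"
      by (rule bspec[OF bas1[THEN conjunct2, THEN conjunct2]])
  qed
  have BM: "B \<subseteq> carrier M" using BE EsubM[OF iI] by blast
  have "\<forall>j\<in>I. \<exists>g. g \<in> carrier G \<and> \<phi> g (?e i) = ?e j" using transitive[OF iI] by blast
  then obtain gs where gs0: "\<forall>j\<in>I. gs j \<in> carrier G \<and> \<phi> (gs j) (?e i) = ?e j"
    using bchoice[of I "\<lambda>j g. g \<in> carrier G \<and> \<phi> g (?e i) = ?e j"] by blast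
  have gsG: "gs j \<in> carrier G" and gse: "\<phi> (gs j) (?e i) = ?e j" if "j \<in> I" for j
    using gs0 that by auto
  have hse: "\<phi> (inv\<^bsub>G\<^esub> gs j) (?e j) = ?e i" if "j \<in> I" for j
    using AL.orbit_sym_aux[OF gsG[OF that] eC[OF iI] gse[OF that]] .
  have inE: "x \<in> ?E j" if "x \<in> carrier M" "?e j \<odot>\<^bsub>M\<^esub> x = x" for j x
    using that by (metis image_eqI)
  have TE: "\<psi> (gs j) b \<in> ?E j" if j: "j \<in> I" and b: "b \<in> B" for j b
  proof -
    obtain m where m: "m \<in> carrier M" "b = ?e i \<odot>\<^bsub>M\<^esub> m" using b BE by blast
    have "\<psi> (gs j) b = ?e j \<odot>\<^bsub>M\<^esub> \<psi> (gs j) m"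
      using psi_semi[OF gsG[OF j] iI gse[OF j] m(1)] m(2) by simp
    then show ?thesis using psiC[OF gsG[OF j] m(1)] by blast
  qed
  have TM: "\<psi> (gs j) b \<in> carrier M" if "j \<in> I" "b \<in> B" for j b
    using psiC[OF gsG[OF that(1)]] BM that(2) by blast
  have EX: "\<exists>a \<in> B \<rightarrow> carrier (R j). y = (\<Oplus>\<^bsub>M\<^esub>b\<in>B. ?ci j (a b) \<odot>\<^bsub>M\<^esub> \<psi> (gs j) b)"
    if j: "j \<in> I" and y: "y \<in> ?E j" for j y
  proof -
    let ?g = "gs j" let ?h = "inv\<^bsub>G\<^esub> gs j"
    have g: "?g \<in> carrier G" and h: "?h \<in> carrier G" using gsG[OF j] by auto
    obtain m where m: "m \<in> carrier M" "y = ?e j \<odot>\<^bsub>M\<^esub> m" using y by blast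
    have yM: "y \<in> carrier M" using y EsubM[OF j] by blast
    have "\<psi> ?h y = ?e i \<odot>\<^bsub>M\<^esub> \<psi> ?h m"
      using psi_semi[OF h j hse[OF j] m(1)] m(2) by simp
    then have zE: "\<psi> ?h y \<in> ?E i" using psiC[OF h m(1)] by blast
    then obtain c where c: "c \<in> B \<rightarrow>\<^sub>E carrier (R i)"
      and z: "\<psi> ?h y = (\<Oplus>\<^bsub>M\<^esub>b\<in>B. ?ci i (c b) \<odot>\<^bsub>M\<^esub> b)"
      using basU by blast
    have cL: "(\<lambda>b. ?ci i (c b)) \<in> B \<rightarrow> carrier ?L" using c ciC[OF iI] by auto
    have idM: "(\<lambda>b. b) \<in> B \<rightarrow> carrier M" using BM by auto
    define \<sigma> where "\<sigma> b = \<phi> ?g (?ci i (c b)) j" for b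
    have \<sigma>C: "\<sigma> b \<in> carrier (R j)" if "b \<in> B" for b
      unfolding \<sigma>_def using phi_car[OF g iI j gse[OF j]] c that by auto
    have \<sigma>E: "\<phi> ?g (?ci i (c b)) = ?ci j (\<sigma> b)" if "b \<in> B" for b
      unfolding \<sigma>_def by (rule phi_eq[OF g iI j gse[OF j]]) (use c that in auto)
    have "y = \<psi> ?g (\<psi> ?h y)" using psi_inv2[OF g yM] by simp
    also have "\<dots> = (\<Oplus>\<^bsub>M\<^esub>b\<in>B. \<phi> ?g (?ci i (c b)) \<odot>\<^bsub>M\<^esub> \<psi> ?g b)"
      unfolding z using psi_lin_sum[OF g finB cL idM] .
    also have "\<dots> = (\<Oplus>\<^bsub>M\<^esub>b\<in>B. ?ci j (\<sigma> b) \<odot>\<^bsub>M\<^esub> \<psi> ?g b)"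
    proof (rule M.finsum_cong'[OF refl])
      show "(\<lambda>b. ?ci j (\<sigma> b) \<odot>\<^bsub>M\<^esub> \<psi> ?g b) \<in> B \<rightarrow> carrier M"
        using \<sigma>C TM[OF j] ciC[OF j] by (auto intro!: M.smult_closed)
      fix b assume "b \<in> B"
      then show "\<phi> ?g (?ci i (c b)) \<odot>\<^bsub>M\<^esub> \<psi> ?g b = ?ci j (\<sigma> b) \<odot>\<^bsub>M\<^esub> \<psi> ?g b"
        using \<sigma>E by simp
    qed
    finally show ?thesis
      using \<sigma>C by (intro bexI[of _ \<sigma>]) auto
  qed
  have UN: "a b0 = a' b0"
    if j: "j \<in> I" and a: "a \<in> B \<rightarrow> carrier (R j)" and a': "a' \<in> B \<rightarrow> carrier (R j)"
      and eq: "(\<Oplus>\<^bsub>M\<^esub>b\<in>B. ?ci j (a b) \<odot>\<^bsub>M\<^esub> \<psi> (gs j) b) = (\<Oplus>\<^bsub>M\<^esub>b\<in>B. ?ci j (a' b) \<odot>\<^bsub>M\<^esub> \<psi> (gs j) b)"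
      and b0: "b0 \<in> B" for j a a' b0
  proof -
    let ?g = "gs j" let ?h = "inv\<^bsub>G\<^esub> gs j"
    have g: "?g \<in> carrier G" and h: "?h \<in> carrier G" using gsG[OF j] by auto
    define \<tau> where "\<tau> x = \<phi> ?h (?ci j x) i" for x
    have key: "\<psi> ?h (\<Oplus>\<^bsub>M\<^esub>b\<in>B. ?ci j (f b) \<odot>\<^bsub>M\<^esub> \<psi> ?g b) = (\<Oplus>\<^bsub>M\<^esub>b\<in>B. ?ci i (\<tau> (f b)) \<odot>\<^bsub>M\<^esub> b)
       \<and> (\<lambda>b. \<tau> (f b)) \<in> B \<rightarrow> carrier (R i)"
      if f: "f \<in> B \<rightarrow> carrier (R j)" for f
    proof
      have fL: "(\<lambda>b. ?ci j (f b)) \<in> B \<rightarrow> carrier ?L" using f ciC[OF j] by auto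
      have TgM: "(\<lambda>b. \<psi> ?g b) \<in> B \<rightarrow> carrier M" using TM[OF j] by auto
        have \<tau>C: "\<tau> (f b) \<in> carrier (R i)" if "b \<in> B" for b
        unfolding \<tau>_def using phi_car[OF h j iI hse[OF j]] f that by auto
      show "\<psi> ?h (\<Oplus>\<^bsub>M\<^esub>b\<in>B. ?ci j (f b) \<odot>\<^bsub>M\<^esub> \<psi> ?g b) = (\<Oplus>\<^bsub>M\<^esub>b\<in>B. ?ci i (\<tau> (f b)) \<odot>\<^bsub>M\<^esub> b)"
        unfolding psi_lin_sum[OF h finB fL TgM]
      proof (rule M.finsum_cong'[OF refl])
      show "(\<lambda>b. ?ci i (\<tau> (f b)) \<odot>\<^bsub>M\<^esub> b) \<in> B \<rightarrow> carrier M"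
        using \<tau>C BM ciC[OF iI] by (auto intro!: M.smult_closed)
        fix b assume b: "b \<in> B"
        have e1: "\<psi> ?h (\<psi> ?g b) = b" using psi_inv[OF g] BM b by auto
        have e2: "\<phi> ?h (?ci j (f b)) = ?ci i (\<tau> (f b))"
          unfolding \<tau>_def by (rule phi_eq[OF h j iI hse[OF j]]) (use f b in auto)
        show "\<phi> ?h (?ci j (f b)) \<odot>\<^bsub>M\<^esub> \<psi> ?h (\<psi> ?g b) = ?ci i (\<tau> (f b)) \<odot>\<^bsub>M\<^esub> b"
          by (simp only: e1 e2)
      qed
      show "(\<lambda>b. \<tau> (f b)) \<in> B \<rightarrow> carrier (R i)"
        using \<tau>C by auto
    qed
    let ?v = "\<psi> ?h (\<Oplus>\<^bsub>M\<^esub>b\<in>B. ?ci j (a b) \<odot>\<^bsub>M\<^esub> \<psi> ?g b)"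
    have vE: "?v \<in> ?E i"
    proof (rule inE)
      have "(\<Oplus>\<^bsub>M\<^esub>b\<in>B. ?ci i (\<tau> (a b)) \<odot>\<^bsub>M\<^esub> b) \<in> carrier M"
        using key[OF a] BM ciC[OF iI] by (auto intro!: M.finsum_closed M.smult_closed)
      then show "?v \<in> carrier M" using key[OF a] by simp
      show "?e i \<odot>\<^bsub>M\<^esub> ?v = ?v"
        using key[OF a] sum_fix[OF iI finB, of "\<lambda>b. \<tau> (a b)" "\<lambda>b. b"] BM by auto
    qed
    have P1: "restrict (\<lambda>b. \<tau> (a b)) B \<in> B \<rightarrow>\<^sub>E carrier (R i) \<and>
        ?v = (\<Oplus>\<^bsub>M\<^esub>b\<in>B. ?ci i (restrict (\<lambda>b. \<tau> (a b)) B b) \<odot>\<^bsub>M\<^esub> b)"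
    proof
      show "restrict (\<lambda>b. \<tau> (a b)) B \<in> B \<rightarrow>\<^sub>E carrier (R i)" using key[OF a] by auto
      show "?v = (\<Oplus>\<^bsub>M\<^esub>b\<in>B. ?ci i (restrict (\<lambda>b. \<tau> (a b)) B b) \<odot>\<^bsub>M\<^esub> b)"
        unfolding key[OF a, THEN conjunct1]
        by (rule M.finsum_cong'[OF refl]) (use key[OF a] BM ciC[OF iI] in \<open>auto intro!: M.smult_closed simp: Pi_iff\<close>)
    qed
    have P2: "restrict (\<lambda>b. \<tau> (a' b)) B \<in> B \<rightarrow>\<^sub>E carrier (R i) \<and>
        ?v = (\<Oplus>\<^bsub>M\<^esub>b\<in>B. ?ci i (restrict (\<lambda>b. \<tau> (a' b)) B b) \<odot>\<^bsub>M\<^esub> b)"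
    proof
      show "restrict (\<lambda>b. \<tau> (a' b)) B \<in> B \<rightarrow>\<^sub>E carrier (R i)" using key[OF a'] by auto
      show "?v = (\<Oplus>\<^bsub>M\<^esub>b\<in>B. ?ci i (restrict (\<lambda>b. \<tau> (a' b)) B b) \<odot>\<^bsub>M\<^esub> b)"
        unfolding eq key[OF a', THEN conjunct1]
        by (rule M.finsum_cong'[OF refl]) (use key[OF a'] BM ciC[OF iI] in \<open>auto intro!: M.smult_closed simp: Pi_iff\<close>)
    qed
    have "restrict (\<lambda>b. \<tau> (a b)) B = restrict (\<lambda>b. \<tau> (a' b)) B"
      using basU[OF vE] P1 P2 by blast
    then have "\<tau> (a b0) = \<tau> (a' b0)" using b0 by (metis restrict_apply')
    moreover have ab0: "a b0 \<in> carrier (R j)" "a' b0 \<in> carrier (R j)" using a a' b0 by auto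
    moreover have "\<phi> ?h (?ci j (a b0)) = ?ci i (\<tau> (a b0))"
      unfolding \<tau>_def by (rule phi_eq[OF h j iI hse[OF j] ab0(1)])
    moreover have "\<phi> ?h (?ci j (a' b0)) = ?ci i (\<tau> (a' b0))"
      unfolding \<tau>_def by (rule phi_eq[OF h j iI hse[OF j] ab0(2)])
    ultimately have "\<phi> ?h (?ci j (a b0)) = \<phi> ?h (?ci j (a' b0))"
      by simp
    moreover have "?ci j (a b0) \<in> carrier ?L" "?ci j (a' b0) \<in> carrier ?L"
      using ciC[OF j] ab0 by auto
    ultimately have "?ci j (a b0) = ?ci j (a' b0)"
      by (rule inj_onD[OF AL.inj_prop[OF h]])
    then show ?thesis by (rule ci_inj[OF j])
  qed
  let ?F = "\<lambda>m. \<lambda>j\<in>I. ?e j \<odot>\<^bsub>M\<^esub> m"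
  have Finj: "x = y" if "x \<in> carrier M" "y \<in> carrier M" "\<And>j. j \<in> I \<Longrightarrow> ?e j \<odot>\<^bsub>M\<^esub> x = ?e j \<odot>\<^bsub>M\<^esub> y" for x y
  proof -
    have "?F x = ?F y" using that(3) by (intro restrict_ext) auto
    then show ?thesis using nat_iso that(1,2) unfolding bij_betw_def inj_on_def by blast
  qed
  have "\<forall>b\<in>B. \<exists>m. m \<in> carrier M \<and> (\<forall>j\<in>I. ?e j \<odot>\<^bsub>M\<^esub> m = \<psi> (gs j) b)"
  proof
    fix b assume b: "b \<in> B"
    have "(\<lambda>j\<in>I. \<psi> (gs j) b) \<in> (\<Pi>\<^sub>E j\<in>I. ?E j)" using TE b by auto
    then obtain m where m: "m \<in> carrier M" "?F m = (\<lambda>j\<in>I. \<psi> (gs j) b)"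
      using nat_iso unfolding bij_betw_def by (metis (no_types, lifting) imageE)
    have "\<forall>j\<in>I. ?e j \<odot>\<^bsub>M\<^esub> m = \<psi> (gs j) b"
    proof
      fix j assume j: "j \<in> I"
      have "?F m j = (\<lambda>j\<in>I. \<psi> (gs j) b) j" using m(2) by simp
      then show "?e j \<odot>\<^bsub>M\<^esub> m = \<psi> (gs j) b" using j by simp
    qed
    then show "\<exists>m. m \<in> carrier M \<and> (\<forall>j\<in>I. ?e j \<odot>\<^bsub>M\<^esub> m = \<psi> (gs j) b)" using m(1) by blast
  qed
  then obtain \<beta> where \<beta>0: "\<forall>b\<in>B. \<beta> b \<in> carrier M \<and> (\<forall>j\<in>I. ?e j \<odot>\<^bsub>M\<^esub> \<beta> b = \<psi> (gs j) b)"
    using bchoice[of B "\<lambda>b m. m \<in> carrier M \<and> (\<forall>j\<in>I. ?e j \<odot>\<^bsub>M\<^esub> m = \<psi> (gs j) b)"] by blast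
  have \<beta>M: "\<beta> b \<in> carrier M" and \<beta>e: "\<And>j. j \<in> I \<Longrightarrow> ?e j \<odot>\<^bsub>M\<^esub> \<beta> b = \<psi> (gs j) b"
    if "b \<in> B" for b using \<beta>0 that by auto
  have \<beta>inj: "inj_on \<beta> B"
  proof (rule inj_onI)
    fix b b' assume b: "b \<in> B" and b': "b' \<in> B" and eq: "\<beta> b = \<beta> b'"
    have "\<psi> (gs i) b = \<psi> (gs i) b'" using \<beta>e[OF b iI] \<beta>e[OF b' iI] eq by simp
    then show "b = b'" using AM.inj_prop[OF gsG[OF iI]] b b' BM by (meson inj_onD subsetD)
  qed
  have sum_comp: "?e j \<odot>\<^bsub>M\<^esub> (\<Oplus>\<^bsub>M\<^esub>b\<in>B. C b \<odot>\<^bsub>M\<^esub> \<beta> b) = (\<Oplus>\<^bsub>M\<^esub>b\<in>B. ?ci j (C b j) \<odot>\<^bsub>M\<^esub> \<psi> (gs j) b)"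
    if j: "j \<in> I" and C: "C \<in> B \<rightarrow> carrier ?L" for j C
  proof -
    have Cj: "C b j \<in> carrier (R j)" if "b \<in> B" for b using C that j by (auto simp: pr_carrier)
    have cl: "(\<lambda>b. C b \<odot>\<^bsub>M\<^esub> \<beta> b) \<in> B \<rightarrow> carrier M" using C \<beta>M by auto
    have "?e j \<odot>\<^bsub>M\<^esub> (\<Oplus>\<^bsub>M\<^esub>b\<in>B. C b \<odot>\<^bsub>M\<^esub> \<beta> b) = (\<Oplus>\<^bsub>M\<^esub>b\<in>B. ?e j \<odot>\<^bsub>M\<^esub> (C b \<odot>\<^bsub>M\<^esub> \<beta> b))"
      using M.finsum_smult_ldistr[OF finB eC[OF j] cl] .
    also have "\<dots> = (\<Oplus>\<^bsub>M\<^esub>b\<in>B. ?ci j (C b j) \<odot>\<^bsub>M\<^esub> \<psi> (gs j) b)"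
    proof (rule M.finsum_cong'[OF refl])
      show "(\<lambda>b. ?ci j (C b j) \<odot>\<^bsub>M\<^esub> \<psi> (gs j) b) \<in> B \<rightarrow> carrier M"
        using Cj ciC[OF j] TM[OF j] by (auto intro!: M.smult_closed)
      fix b assume b: "b \<in> B"
      show "?e j \<odot>\<^bsub>M\<^esub> (C b \<odot>\<^bsub>M\<^esub> \<beta> b) = ?ci j (C b j) \<odot>\<^bsub>M\<^esub> \<psi> (gs j) b"
        using comp[OF j _ \<beta>M[OF b], of "C b"] C b \<beta>e[OF b j] by auto
    qed
    finally show ?thesis .
  qed
  have reidx: "(\<Oplus>\<^bsub>M\<^esub>x\<in>\<beta> ` B. c x \<odot>\<^bsub>M\<^esub> x) = (\<Oplus>\<^bsub>M\<^esub>b\<in>B. c (\<beta> b) \<odot>\<^bsub>M\<^esub> \<beta> b)"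
    if c: "c \<in> \<beta> ` B \<rightarrow>\<^sub>E carrier ?L" for c
  proof -
    have "(\<lambda>x. c x \<odot>\<^bsub>M\<^esub> x) \<in> \<beta> ` B \<rightarrow> carrier M" using c \<beta>M by auto
    then show ?thesis using M.finsum_reindex[OF _ \<beta>inj] by blast
  qed
  show ?thesis
    unfolding free_finite_rank_def finite_basis_def
  proof (intro exI conjI ballI)
    show "finite (\<beta> ` B)" using finB by simp
    show "\<beta> ` B \<subseteq> carrier M" using \<beta>M by auto
    fix v assume v: "v \<in> carrier M"
    have "\<forall>j\<in>I. \<exists>a. a \<in> B \<rightarrow> carrier (R j) \<and> ?e j \<odot>\<^bsub>M\<^esub> v = (\<Oplus>\<^bsub>M\<^esub>b\<in>B. ?ci j (a b) \<odot>\<^bsub>M\<^esub> \<psi> (gs j) b)"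
    proof
      fix j assume j: "j \<in> I"
      have "?e j \<odot>\<^bsub>M\<^esub> v \<in> ?E j" using v by blast
      then show "\<exists>a. a \<in> B \<rightarrow> carrier (R j) \<and> ?e j \<odot>\<^bsub>M\<^esub> v = (\<Oplus>\<^bsub>M\<^esub>b\<in>B. ?ci j (a b) \<odot>\<^bsub>M\<^esub> \<psi> (gs j) b)"
        using EX[OF j] by blast
    qed
    then obtain A where A0: "\<forall>j\<in>I. A j \<in> B \<rightarrow> carrier (R j) \<and> ?e j \<odot>\<^bsub>M\<^esub> v = (\<Oplus>\<^bsub>M\<^esub>b\<in>B. ?ci j (A j b) \<odot>\<^bsub>M\<^esub> \<psi> (gs j) b)"
      using bchoice[of I "\<lambda>j a. a \<in> B \<rightarrow> carrier (R j) \<and> ?e j \<odot>\<^bsub>M\<^esub> v = (\<Oplus>\<^bsub>M\<^esub>b\<in>B. ?ci j (a b) \<odot>\<^bsub>M\<^esub> \<psi> (gs j) b)"] by blast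
    have AC: "A j \<in> B \<rightarrow> carrier (R j)" and Ae: "?e j \<odot>\<^bsub>M\<^esub> v = (\<Oplus>\<^bsub>M\<^esub>b\<in>B. ?ci j (A j b) \<odot>\<^bsub>M\<^esub> \<psi> (gs j) b)"
      if "j \<in> I" for j using A0 that by auto
    define c0 where "c0 = (\<lambda>x\<in>\<beta> ` B. \<lambda>j\<in>I. A j (the_inv_into B \<beta> x))"
    have c0b: "c0 (\<beta> b) = (\<lambda>j\<in>I. A j b)" if "b \<in> B" for b
      unfolding c0_def using that the_inv_into_f_f[OF \<beta>inj that] by simp
    have c0bC: "(\<lambda>j\<in>I. A j b) \<in> carrier ?L" if "b \<in> B" for b
      using AC that by (auto simp: pr_carrier)
    have c0C: "c0 \<in> \<beta> ` B \<rightarrow>\<^sub>E carrier ?L"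
      using c0b c0bC unfolding c0_def by (auto simp: the_inv_into_f_f[OF \<beta>inj])
    have rep: "v = (\<Oplus>\<^bsub>M\<^esub>x\<in>\<beta> ` B. c x \<odot>\<^bsub>M\<^esub> x) \<longleftrightarrow>
        (\<forall>j\<in>I. (\<Oplus>\<^bsub>M\<^esub>b\<in>B. ?ci j (A j b) \<odot>\<^bsub>M\<^esub> \<psi> (gs j) b) = (\<Oplus>\<^bsub>M\<^esub>b\<in>B. ?ci j (c (\<beta> b) j) \<odot>\<^bsub>M\<^esub> \<psi> (gs j) b))"
      if c: "c \<in> \<beta> ` B \<rightarrow>\<^sub>E carrier ?L" for c
    proof -
      have CL: "(\<lambda>b. c (\<beta> b)) \<in> B \<rightarrow> carrier ?L" using c by auto
      have wM: "(\<Oplus>\<^bsub>M\<^esub>b\<in>B. c (\<beta> b) \<odot>\<^bsub>M\<^esub> \<beta> b) \<in> carrier M"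
        using CL \<beta>M by (auto intro!: M.finsum_closed)
      show ?thesis
        unfolding reidx[OF c]
      proof
        assume "v = (\<Oplus>\<^bsub>M\<^esub>b\<in>B. c (\<beta> b) \<odot>\<^bsub>M\<^esub> \<beta> b)"
        then show "\<forall>j\<in>I. (\<Oplus>\<^bsub>M\<^esub>b\<in>B. ?ci j (A j b) \<odot>\<^bsub>M\<^esub> \<psi> (gs j) b) = (\<Oplus>\<^bsub>M\<^esub>b\<in>B. ?ci j (c (\<beta> b) j) \<odot>\<^bsub>M\<^esub> \<psi> (gs j) b)"
          using Ae sum_comp[OF _ CL] by auto
      next
        assume H: "\<forall>j\<in>I. (\<Oplus>\<^bsub>M\<^esub>b\<in>B. ?ci j (A j b) \<odot>\<^bsub>M\<^esub> \<psi> (gs j) b) = (\<Oplus>\<^bsub>M\<^esub>b\<in>B. ?ci j (c (\<beta> b) j) \<odot>\<^bsub>M\<^esub> \<psi> (gs j) b)"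
        show "v = (\<Oplus>\<^bsub>M\<^esub>b\<in>B. c (\<beta> b) \<odot>\<^bsub>M\<^esub> \<beta> b)"
        proof (rule Finj[OF v wM])
          fix j assume j: "j \<in> I"
          show "?e j \<odot>\<^bsub>M\<^esub> v = ?e j \<odot>\<^bsub>M\<^esub> (\<Oplus>\<^bsub>M\<^esub>b\<in>B. c (\<beta> b) \<odot>\<^bsub>M\<^esub> \<beta> b)"
            using Ae[OF j] sum_comp[OF j CL] H j by simp
        qed
      qed
    qed
    show "\<exists>!c. c \<in> \<beta> ` B \<rightarrow>\<^sub>E carrier ?L \<and> v = (\<Oplus>\<^bsub>M\<^esub>x\<in>\<beta> ` B. c x \<odot>\<^bsub>M\<^esub> x)"
    proof (rule ex1I[of _ c0])
      show "c0 \<in> \<beta> ` B \<rightarrow>\<^sub>E carrier ?L \<and> v = (\<Oplus>\<^bsub>M\<^esub>x\<in>\<beta> ` B. c0 x \<odot>\<^bsub>M\<^esub> x)"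
      proof
        show "c0 \<in> \<beta> ` B \<rightarrow>\<^sub>E carrier ?L" by (rule c0C)
        show "v = (\<Oplus>\<^bsub>M\<^esub>x\<in>\<beta> ` B. c0 x \<odot>\<^bsub>M\<^esub> x)"
          unfolding rep[OF c0C]
        proof
          fix j assume j: "j \<in> I"
          show "(\<Oplus>\<^bsub>M\<^esub>b\<in>B. ?ci j (A j b) \<odot>\<^bsub>M\<^esub> \<psi> (gs j) b) = (\<Oplus>\<^bsub>M\<^esub>b\<in>B. ?ci j (c0 (\<beta> b) j) \<odot>\<^bsub>M\<^esub> \<psi> (gs j) b)"
            using c0b j by (intro M.finsum_cong'[OF refl]) (auto intro!: M.smult_closed ciC[OF j] TM[OF j] AC[OF j, THEN funcset_mem])
        qed
      qed
      fix c assume H: "c \<in> \<beta> ` B \<rightarrow>\<^sub>E carrier ?L \<and> v = (\<Oplus>\<^bsub>M\<^esub>x\<in>\<beta> ` B. c x \<odot>\<^bsub>M\<^esub> x)"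
      then have c: "c \<in> \<beta> ` B \<rightarrow>\<^sub>E carrier ?L" by blast
      show "c = c0"
      proof (rule PiE_ext[OF c c0C])
        fix x assume "x \<in> \<beta> ` B"
        then obtain b where b: "b \<in> B" and x: "x = \<beta> b" by blast
        have cbC: "c (\<beta> b) \<in> carrier ?L" using c b by auto
        show "c x = c0 x" unfolding x c0b[OF b]
        proof (rule PiE_ext[OF cbC[unfolded pr_carrier] c0bC[OF b, unfolded pr_carrier]])
          fix j assume j: "j \<in> I"
          have aC: "(\<lambda>b. c (\<beta> b) j) \<in> B \<rightarrow> carrier (R j)" using c j by (auto simp: pr_carrier)
          have "(\<Oplus>\<^bsub>M\<^esub>b\<in>B. ?ci j (c (\<beta> b) j) \<odot>\<^bsub>M\<^esub> \<psi> (gs j) b) = (\<Oplus>\<^bsub>M\<^esub>b\<in>B. ?ci j (A j b) \<odot>\<^bsub>M\<^esub> \<psi> (gs j) b)"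
            using rep[OF c] conjunct2[OF H] j by auto
          then have "c (\<beta> b) j = A j b" by (rule UN[OF j aC AC[OF j] _ b])
          then show "c (\<beta> b) j = (\<lambda>j\<in>I. A j b) j" using j by simp
        qed
      qed
    qed
  qed
qed

end
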